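(* Let $n$ be an even positive integer. Then $C_{1/6}(\mathrm{1v2Cycle})\ge\frac n4$, where $\mathrm{1v2Cycle}$ is on $n$ vertices.
   Context: Graphs on vertex set $\{1,\dots,n\}$ are encoded as $x\in\{0,1\}^N$, $N=\binom n2$, one bit per unordered pair indicating presence of the edge. $\mathrm{1v2Cycle}:\Delta\to\{0,1\}$ is defined on the set $\Delta$ of graphs that are either a single cycle of length $n$ (value $1$) or a disjoint union of two cycles each of length $n/2$ (value $0$). For a partial $g:\Delta\to\{0,1\}$, the canonical distribution $\mathcal{D}_g$ on $\Delta$ outputs with probability $1/2$ a uniform element of $g^{-1}(1)$ and with probability $1/2$ a uniform element of $g^{-1}(0)$. A certificate of $f:\Delta\to\{0,1\}$ on $x\in\Delta$ is a set $C\subseteq\{1,\dots,N\}$ such that every $y\in\Delta$ with $y|_C=x|_C$ has $f(y)=f(x)$; $C(f)=\max_{x\in\Delta}\min\{|C|:C\text{ certificate on }x\}$. The $\delta$-approximate certificate complexity is $C_\delta(g)=\min\{C(f): f:\Delta\to\{0,1\},\ \Pr_{x\sim\mathcal{D}_g}[f(x)\ne g(x)]\le\delta\}$. *)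

theory Defs
  imports Complex_Main
begin

text \<open>Graphs on vertex set {1..n} are identified with their edge sets; an edge is an
  unordered pair {i,j} with i \<noteq> j. The N = n choose 2 input bits are indexed by
  these unordered pairs (the set Pairs n).\<close>

definition Pairs :: "nat \<Rightarrow> nat set set" where
  "Pairs n = {{i, j} | i j. i \<in> {1..n} \<and> j \<in> {1..n} \<and> i \<noteq> j}"

definition cycle_edges :: "nat list \<Rightarrow> nat set set" where
  "cycle_edges vs = {{vs ! i, vs ! ((i + 1) mod length vs)} | i. i < length vs}"

definition one_cycle :: "nat \<Rightarrow> nat set set \<Rightarrow> bool" where
  "one_cycle n E \<longleftrightarrow> (\<exists>vs. distinct vs \<and> set vs = {1..n} \<and> length vs = n \<and> 3 \<le> length vs
      \<and> E = cycle_edges vs)"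

definition two_cycles :: "nat \<Rightarrow> nat set set \<Rightarrow> bool" where
  "two_cycles n E \<longleftrightarrow> (\<exists>vs ws. distinct (vs @ ws) \<and> set (vs @ ws) = {1..n}
      \<and> 2 * length vs = n \<and> 2 * length ws = n \<and> 3 \<le> length vs \<and> 3 \<le> length ws
      \<and> E = cycle_edges vs \<union> cycle_edges ws)"

definition Delta :: "nat \<Rightarrow> nat set set set" where
  "Delta n = {E. one_cycle n E \<or> two_cycles n E}"

definition oneVtwoCycle :: "nat \<Rightarrow> nat set set \<Rightarrow> bool" where
  "oneVtwoCycle n E = one_cycle n E"

definition is_certificate :: "nat \<Rightarrow> (nat set set \<Rightarrow> bool) \<Rightarrow> nat set set \<Rightarrow> nat set set \<Rightarrow> bool" where
  "is_certificate n f x C \<longleftrightarrow> C \<subseteq> Pairs n \<and>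
     (\<forall>y \<in> Delta n. (\<forall>e \<in> C. (e \<in> y \<longleftrightarrow> e \<in> x)) \<longrightarrow> f y = f x)"

definition cert_complexity :: "nat \<Rightarrow> (nat set set \<Rightarrow> bool) \<Rightarrow> nat" where
  "cert_complexity n f =
     Max ((\<lambda>x. Min (card ` {C. is_certificate n f x C})) ` Delta n)"

text \<open>Pr_{x ~ D_g}[f x \<noteq> g x] for the canonical distribution D_g on Delta n.\<close>
definition canon_err :: "nat \<Rightarrow> (nat set set \<Rightarrow> bool) \<Rightarrow> (nat set set \<Rightarrow> bool) \<Rightarrow> real" where
  "canon_err n g f =
     (1/2) * real (card {x \<in> Delta n. g x \<and> f x \<noteq> g x}) / real (card {x \<in> Delta n. g x})
   + (1/2) * real (card {x \<in> Delta n. \<not> g x \<and> f x \<noteq> g x}) / real (card {x \<in> Delta n. \<not> g x})"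

definition approx_cert_complexity :: "nat \<Rightarrow> real \<Rightarrow> (nat set set \<Rightarrow> bool) \<Rightarrow> nat" where
  "approx_cert_complexity n \<delta> g =
     Inf {cert_complexity n f | f. canon_err n g f \<le> \<delta>}"

end

theory Submission
  imports Defs
begin

definition Perms :: "nat \<Rightarrow> nat list set" where
  "Perms n = {s. distinct s \<and> set s = {1..n} \<and> length s = n}"

definition imgG :: "(nat \<Rightarrow> nat) \<Rightarrow> nat set set \<Rightarrow> nat set set" where
  "imgG p E = (\<lambda>e. p ` e) ` E"

lemma finite_Perms: "finite (Perms n)"
proof -
  have "Perms n \<subseteq> {xs. set xs \<subseteq> {1..n} \<and> length xs = n}" unfolding Perms_def by auto
  moreover have "finite {xs. set xs \<subseteq> {1..n} \<and> length xs = n}"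
    by (rule finite_lists_length_eq) simp
  ultimately show ?thesis by (rule finite_subset)
qed

lemma Perms_ne: "[1..<n+1] \<in> Perms n"
  unfolding Perms_def by auto

lemma map_nth_mod: "i < length vs \<Longrightarrow> map p vs ! (Suc i mod length vs) = p (vs ! (Suc i mod length vs))"
proof -
  assume "i < length vs"
  hence "0 < length vs" by linarith
  hence "Suc i mod length vs < length vs" by (rule mod_less_divisor)
  thus ?thesis by simp
qed

lemma ce_alt: "cycle_edges vs = (\<lambda>i. {vs!i, vs!((i+1) mod length vs)}) ` {..<length vs}"
  unfolding cycle_edges_def by auto

lemma ce_map: "cycle_edges (map p vs) = imgG p (cycle_edges vs)"
  unfolding ce_alt imgG_def image_image
  by (rule image_cong) (auto simp: map_nth_mod)

definition relab :: "nat list \<Rightarrow> nat list \<Rightarrow> nat \<Rightarrow> nat" where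
  "relab s s' v = s' ! (THE j. j < length s \<and> s ! j = v)"

lemma the_idx: "distinct s \<Longrightarrow> j < length s \<Longrightarrow> (THE i. i < length s \<and> s ! i = s ! j) = j"
  by (rule the_equality) (auto simp: nth_eq_iff_index_eq)

lemma relab_map:
  assumes "s \<in> Perms n" "s' \<in> Perms n"
  shows "map (relab s s') s = s'"
  using assms unfolding Perms_def relab_def
  by (intro nth_equalityI) (auto simp: the_idx)

lemma relab_props:
  assumes "s \<in> Perms n" "s' \<in> Perms n"
  shows "\<forall>t\<in>Perms n. map (relab s s') t \<in> Perms n" "inj_on (map (relab s s')) (Perms n)"
proof -
  let ?p = "relab s s'"
  have m: "map ?p s = s'" by (rule relab_map[OF assms])
  have ss: "set s = {1..n}" "set s' = {1..n}" using assms unfolding Perms_def by auto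
  have "distinct (map ?p s)" using m assms(2) unfolding Perms_def by simp
  hence inj0: "inj_on ?p (set s)" by (simp add: distinct_map)
  hence inj: "inj_on ?p {1..n}" using ss by simp
  have "?p ` set s = set s'" using m by (metis set_map)
  hence im: "?p ` {1..n} = {1..n}" using ss by simp
  show "\<forall>t\<in>Perms n. map ?p t \<in> Perms n"
  proof
    fix t assume t: "t \<in> Perms n"
    hence "set t = {1..n}" "distinct t" "length t = n" unfolding Perms_def by auto
    thus "map ?p t \<in> Perms n" using inj im unfolding Perms_def by (simp add: distinct_map)
  qed
  show "inj_on (map ?p) (Perms n)"
  proof (rule inj_onI)
    fix t u assume "t \<in> Perms n" "u \<in> Perms n" "map ?p t = map ?p u"
    moreover have "inj_on ?p (set t \<union> set u)" using inj \<open>t \<in> Perms n\<close> \<open>u \<in> Perms n\<close>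
      unfolding Perms_def by simp
    ultimately show "t = u" by (metis map_inj_on)
  qed
qed

definition fib :: "nat \<Rightarrow> (nat list \<Rightarrow> nat set set) \<Rightarrow> nat set set \<Rightarrow> nat list set" where
  "fib n F E = {t \<in> Perms n. F t = E}"

lemma fib_le:
  assumes F: "\<And>p t. F (map p t) = imgG p (F t)"
    and "s \<in> Perms n" "s' \<in> Perms n"
  shows "card (fib n F (F s)) \<le> card (fib n F (F s'))"
proof -
  let ?p = "relab s s'"
  have m: "map ?p s = s'" by (rule relab_map[OF assms(2,3)])
  note pr = relab_props[OF assms(2,3)]
  show ?thesis
  proof (rule card_inj_on_le[where f="map ?p"])
    show "inj_on (map ?p) (fib n F (F s))" using pr(2) unfolding fib_def
      by (rule inj_on_subset) auto
    show "map ?p ` fib n F (F s) \<subseteq> fib n F (F s')"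
    proof
      fix u assume "u \<in> map ?p ` fib n F (F s)"
      then obtain t where t: "t \<in> Perms n" "F t = F s" "u = map ?p t" unfolding fib_def by auto
      have "F u = imgG ?p (F s)" using t F by simp
      also have "\<dots> = F s'" using F[of ?p s] m by simp
      finally show "u \<in> fib n F (F s')" using t pr(1) unfolding fib_def by auto
    qed
    show "finite (fib n F (F s'))" unfolding fib_def using finite_Perms by simp
  qed
qed

lemma fib_count:
  assumes F: "\<And>p t. F (map p t) = imgG p (F t)"
    and s0: "s0 \<in> Perms n"
  shows "card {t \<in> Perms n. Q (F t)} = card {E \<in> F ` Perms n. Q E} * card (fib n F (F s0))"
proof -
  have eqc: "card (fib n F E) = card (fib n F (F s0))" if "E \<in> F ` Perms n" for E
    using that fib_le[OF F] s0 by (auto intro: antisym)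
  have "{t \<in> Perms n. Q (F t)} = (\<Union>E\<in>{E \<in> F ` Perms n. Q E}. fib n F E)"
    unfolding fib_def by auto
  hence "card {t \<in> Perms n. Q (F t)} = (\<Sum>E\<in>{E \<in> F ` Perms n. Q E}. card (fib n F E))"
    by (simp only:) (rule card_UN_disjoint, auto simp: fib_def finite_Perms)
  also have "\<dots> = (\<Sum>E\<in>{E \<in> F ` Perms n. Q E}. card (fib n F (F s0)))"
    by (rule sum.cong) (auto simp: eqc)
  finally show ?thesis by simp
qed

lemma fib_ratio:
  assumes F: "\<And>p t. F (map p t) = imgG p (F t)"
  shows "real (card {E \<in> F ` Perms n. Q E}) / real (card (F ` Perms n))
       = real (card {t \<in> Perms n. Q (F t)}) / real (card (Perms n))"
proof -
  have s0: "[1..<n+1] \<in> Perms n" by (rule Perms_ne)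
  let ?c = "card (fib n F (F [1..<n+1]))"
  have c: "?c > 0" using s0 finite_Perms unfolding fib_def
    by (subst card_gt_0_iff) auto
  have 1: "card {t \<in> Perms n. Q (F t)} = card {E \<in> F ` Perms n. Q E} * ?c"
    by (rule fib_count[OF F s0])
  have 2: "card {t \<in> Perms n. True} = card {E \<in> F ` Perms n. True} * ?c"
    by (rule fib_count[OF F s0])
  show ?thesis using 1 2 c by (simp add: field_simps)
qed

definition sq :: "nat list \<Rightarrow> nat \<Rightarrow> nat" where
  "sq s a = s ! (a mod length s)"

definition Ep :: "nat list \<Rightarrow> nat \<Rightarrow> nat \<Rightarrow> nat set" where
  "Ep s a b = {sq s a, sq s b}"

definition Ycyc :: "nat \<Rightarrow> nat list \<Rightarrow> nat set set" where
  "Ycyc m s = cycle_edges (take m s) \<union> cycle_edges (drop m s)"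

definition Dset :: "nat list \<Rightarrow> nat \<Rightarrow> nat \<Rightarrow> nat set set" where
  "Dset s m i = {Ep s (i+m-1) (i+m), Ep s (i+2*m-1) (i+2*m), Ep s i (i+m-1), Ep s (i+m) (i+2*m-1)}"

lemma Ep_cong: "a mod length s = c mod length s \<Longrightarrow> b mod length s = d mod length s \<Longrightarrow> Ep s a b = Ep s c d"
  unfolding Ep_def sq_def by simp

lemma sq_inj: "distinct s \<Longrightarrow> s \<noteq> [] \<Longrightarrow> sq s a = sq s b \<Longrightarrow> a mod length s = b mod length s"
  unfolding sq_def by (simp add: nth_eq_iff_index_eq)

lemma mod2: fixes a b n :: nat shows "a < 2*n \<Longrightarrow> b < 2*n \<Longrightarrow> a mod n = b mod n \<Longrightarrow> a = b \<or> a = b + n \<or> b = a + n"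
proof -
  assume as: "a < 2*n" "b < 2*n" "a mod n = b mod n"
  have ma: "a mod n = (if a < n then a else a - n)" using as(1) by (simp add: le_mod_geq)
  have mb: "b mod n = (if b < n then b else b - n)" using as(2) by (simp add: le_mod_geq)
  show ?thesis using as(3) ma mb by (auto split: if_splits)
qed

lemma Ep_eq:
  assumes "distinct s" "length s = n" "n > 0" "Ep s a b = Ep s c d"
    "a < 2*n" "b < 2*n" "c < 2*n" "d < 2*n"
  shows "((a = c \<or> a = c + n \<or> c = a + n) \<and> (b = d \<or> b = d + n \<or> d = b + n)) \<or>
         ((a = d \<or> a = d + n \<or> d = a + n) \<and> (b = c \<or> b = c + n \<or> c = b + n))"
proof -
  have ne: "s \<noteq> []" using assms by auto
  from assms(4) have "(sq s a = sq s c \<and> sq s b = sq s d) \<or> (sq s a = sq s d \<and> sq s b = sq s c)"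
    unfolding Ep_def by (auto simp: doubleton_eq_iff)
  thus ?thesis
  proof
    assume h: "sq s a = sq s c \<and> sq s b = sq s d"
    show ?thesis using sq_inj[OF assms(1) ne, of a c] sq_inj[OF assms(1) ne, of b d] h mod2 assms by metis
  next
    assume h: "sq s a = sq s d \<and> sq s b = sq s c"
    show ?thesis using sq_inj[OF assms(1) ne, of a d] sq_inj[OF assms(1) ne, of b c] h mod2 assms by metis
  qed
qed

lemma arith16:
  fixes a b c d i i' k :: nat
  assumes ab2: "(a = i+k+2 \<and> b = i+k+3) \<or> (a = i+2*k+5 \<and> b = i+2*k+6) \<or>
     (a = i \<and> b = i+k+2) \<or> (a = i+k+3 \<and> b = i+2*k+5)"
  and cd2: "(c = i'+k+2 \<and> d = i'+k+3) \<or> (c = i'+2*k+5 \<and> d = i'+2*k+6) \<or>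
     (c = i' \<and> d = i'+k+2) \<or> (c = i'+k+3 \<and> d = i'+2*k+5)"
  and X2: "((a = c \<or> a = c + 2*k+6 \<or> c = a + 2*k+6) \<and> (b = d \<or> b = d + 2*k+6 \<or> d = b + 2*k+6)) \<or>
         ((a = d \<or> a = d + 2*k+6 \<or> d = a + 2*k+6) \<and> (b = c \<or> b = c + 2*k+6 \<or> c = b + 2*k+6))"
  and ii: "i < k+3" "i' < k+3"
  shows "i = i'"
  using ab2 cd2 X2 ii
  apply (elim disjE conjE)
  apply (simp_all only:)
  done

lemma Dset_disj:
  assumes "distinct s" "length s = 2*m" "3 \<le> m" "i < m" "i' < m"
    "e \<in> Dset s m i" "e \<in> Dset s m i'"
  shows "i = i'"
proof -
  have n0: "2*m > 0" using assms by simp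
  note E = Ep_eq[OF assms(1,2) n0]
  obtain a b where ab: "e = Ep s a b" "(a = i+m-1 \<and> b = i+m) \<or> (a = i+2*m-1 \<and> b = i+2*m) \<or>
     (a = i \<and> b = i+m-1) \<or> (a = i+m \<and> b = i+2*m-1)"
    using assms(6) unfolding Dset_def by blast
  obtain c d where cd: "e = Ep s c d" "(c = i'+m-1 \<and> d = i'+m) \<or> (c = i'+2*m-1 \<and> d = i'+2*m) \<or>
     (c = i' \<and> d = i'+m-1) \<or> (c = i'+m \<and> d = i'+2*m-1)"
    using assms(7) unfolding Dset_def by blast
  have bd: "a < 2*(2*m)" "b < 2*(2*m)" "c < 2*(2*m)" "d < 2*(2*m)" using ab(2) cd(2) assms(4,5) by auto
  have X: "((a = c \<or> a = c + 2*m \<or> c = a + 2*m) \<and> (b = d \<or> b = d + 2*m \<or> d = b + 2*m)) \<or>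
         ((a = d \<or> a = d + 2*m \<or> d = a + 2*m) \<and> (b = c \<or> b = c + 2*m \<or> c = b + 2*m))"
    using E[of a b c d] ab(1) cd(1) bd by simp
  obtain k where k: "m = k + 3" using assms(3) by (metis add.commute le_iff_add)
  have ab2: "(a = i+k+2 \<and> b = i+k+3) \<or> (a = i+2*k+5 \<and> b = i+2*k+6) \<or>
     (a = i \<and> b = i+k+2) \<or> (a = i+k+3 \<and> b = i+2*k+5)" using ab(2) k by (elim disjE; simp)
  have cd2: "(c = i'+k+2 \<and> d = i'+k+3) \<or> (c = i'+2*k+5 \<and> d = i'+2*k+6) \<or>
     (c = i' \<and> d = i'+k+2) \<or> (c = i'+k+3 \<and> d = i'+2*k+5)" using cd(2) k by (elim disjE; simp)
  have X2: "((a = c \<or> a = c + 2*k+6 \<or> c = a + 2*k+6) \<and> (b = d \<or> b = d + 2*k+6 \<or> d = b + 2*k+6)) \<or>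
         ((a = d \<or> a = d + 2*k+6 \<or> d = a + 2*k+6) \<and> (b = c \<or> b = c + 2*k+6 \<or> c = b + 2*k+6))"
    using X k by (simp add: add.assoc)
  have ii: "i < k+3" "i' < k+3" using assms(4,5) k by auto
  show ?thesis using arith16[OF ab2 cd2 X2 ii] .
qed

lemma X_mem:
  assumes "length s = n" "n > 0"
  shows "e \<in> cycle_edges s \<longleftrightarrow> (\<exists>p<n. e = Ep s p (Suc p))"
  using assms unfolding ce_alt Ep_def sq_def by auto

lemma Ep_in_X:
  assumes "length s = n" "n > 0"
  shows "Ep s p (Suc p) \<in> cycle_edges s"
proof -
  have "Ep s (p mod n) (Suc (p mod n)) = Ep s p (Suc p)"
    by (rule Ep_cong) (simp_all add: assms(1) mod_Suc_eq)
  moreover have "p mod n < n" using assms by simp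
  ultimately show ?thesis using X_mem[OF assms] by metis
qed

lemma Y_mem:
  assumes "length s = 2*m" "m > 0"
  shows "e \<in> Ycyc m (rotate i s) \<longleftrightarrow>
    (\<exists>j<m. e = Ep s (i+j) (i + Suc j mod m)) \<or> (\<exists>j<m. e = Ep s (i+m+j) (i+m+Suc j mod m))"
proof -
  have l1: "length (take m (rotate i s)) = m" using assms by simp
  have l2: "length (drop m (rotate i s)) = m" using assms by simp
  have n1: "take m (rotate i s) ! j = sq s (i+j)" if "j < m" for j
    using that assms by (simp add: nth_rotate sq_def)
  have n2: "drop m (rotate i s) ! j = sq s (i+m+j)" if "j < m" for j
    using that assms by (simp add: nth_rotate sq_def add.assoc)
  have m1: "Suc j mod m < m" for j using assms by simp
  have c1: "cycle_edges (take m (rotate i s)) = (\<lambda>j. Ep s (i+j) (i + Suc j mod m)) ` {..<m}"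
    unfolding ce_alt l1 Ep_def using n1 m1 by (auto intro!: image_cong)
  have c2: "cycle_edges (drop m (rotate i s)) = (\<lambda>j. Ep s (i+m+j) (i+m+Suc j mod m)) ` {..<m}"
    unfolding ce_alt l2 Ep_def using n2 m1 by (auto intro!: image_cong)
  show ?thesis unfolding Ycyc_def c1 c2 by auto
qed

lemma claimA:
  assumes "length s = 2*m" "3 \<le> m" "i < m" "e \<notin> Dset s m i"
  shows "e \<in> Ycyc m (rotate i s) \<longleftrightarrow> e \<in> cycle_edges s"
proof
  have n0: "2*m > 0" using assms by simp
  assume "e \<in> Ycyc m (rotate i s)"
  then consider j where "j < m" "e = Ep s (i+j) (i + Suc j mod m)"
    | j where "j < m" "e = Ep s (i+m+j) (i+m+Suc j mod m)"
    using Y_mem[OF assms(1)] assms(2) by auto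
  then show "e \<in> cycle_edges s"
  proof cases
    case 1
    show ?thesis
    proof (cases "Suc j < m")
      case True
      then show ?thesis using 1 Ep_in_X[OF assms(1) n0, of "i+j"] by simp
    next
      case False
      hence "Suc j = m" using 1 by simp
      hence "e = Ep s i (i+m-1)" using 1 unfolding Ep_def by auto
      thus ?thesis using assms(4) unfolding Dset_def by simp
    qed
  next
    case 2
    show ?thesis
    proof (cases "Suc j < m")
      case True
      then show ?thesis using 2 Ep_in_X[OF assms(1) n0, of "i+m+j"] by simp
    next
      case False
      hence "Suc j = m" using 2 by simp
      hence a: "Suc j mod m = 0" "i+m+j = i+2*m-1" by auto
      hence "e = Ep s (i+2*m-1) (i+m)" using 2 by simp
      hence "e = Ep s (i+m) (i+2*m-1)" unfolding Ep_def by auto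
      thus ?thesis using assms(4) unfolding Dset_def by simp
    qed
  qed
next
  have n0: "2*m > 0" using assms by simp
  assume "e \<in> cycle_edges s"
  then obtain p where p: "p < 2*m" "e = Ep s p (Suc p)" using X_mem[OF assms(1) n0] by auto
  obtain q where q: "q < 2*m" "i + q = p \<or> i + q = p + 2*m"
  proof (cases "i \<le> p")
    case True thus ?thesis using that[of "p - i"] p by auto
  next
    case False thus ?thesis using that[of "p + 2*m - i"] p assms(3) by auto
  qed
  have eq: "e = Ep s (i+q) (Suc (i+q))"
    unfolding p(2)
  proof (rule Ep_cong)
    have "Suc (p + 2*m) mod (2*m) = Suc p mod (2*m)" by (metis add_Suc mod_add_self2)
    thus "p mod length s = (i + q) mod length s" "Suc p mod length s = Suc (i + q) mod length s"
      using q(2) unfolding assms(1) by (elim disjE; simp)+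
  qed
  have m0: "m > 0" using assms by simp
  consider "q < m - 1" | "q = m - 1" | "m \<le> q" "q < 2*m - 1" | "q = 2*m - 1" using q(1) by linarith
  then show "e \<in> Ycyc m (rotate i s)"
  proof cases
    case 1
    hence qm: "q < m" "Suc q mod m = Suc q" by auto
    have "e = Ep s (i+q) (i + Suc q mod m)" using eq qm(2) by simp
    thus ?thesis unfolding Y_mem[OF assms(1) m0] using qm(1) by blast
  next
    case 2
    hence "e = Ep s (i+m-1) (i+m)" using eq assms(2) by (simp add: Suc_diff_le)
    thus ?thesis using assms(4) unfolding Dset_def by simp
  next
    case 3
    define j where "j = q - m"
    have j: "j < m" "Suc j mod m = Suc j" "i+m+j = i+q" using 3 unfolding j_def by auto
    hence "e = Ep s (i+m+j) (i+m+ Suc j mod m)" using eq by (simp add: add.assoc)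
    thus ?thesis unfolding Y_mem[OF assms(1) m0] using j(1) by blast
  next
    case 4
    hence "e = Ep s (i+2*m-1) (i+2*m)" using eq assms(2) by simp
    thus ?thesis using assms(4) unfolding Dset_def by simp
  qed
qed

lemma good_count:
  assumes "distinct s" "length s = 2*m" "3 \<le> m" "finite C" "card C \<le> k"
  shows "m - k \<le> card {i. i < m \<and> (\<forall>e\<in>C. e \<in> Ycyc m (rotate i s) \<longleftrightarrow> e \<in> cycle_edges s)}"
proof -
  let ?G = "{i. i < m \<and> (\<forall>e\<in>C. e \<in> Ycyc m (rotate i s) \<longleftrightarrow> e \<in> cycle_edges s)}"
  let ?B = "{i. i < m \<and> \<not>(\<forall>e\<in>C. e \<in> Ycyc m (rotate i s) \<longleftrightarrow> e \<in> cycle_edges s)}"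
  have sub: "?B \<subseteq> (\<Union>e\<in>C. {i. i < m \<and> e \<in> Dset s m i})"
  proof
    fix i assume "i \<in> ?B"
    then obtain e where e: "i < m" "e \<in> C" "\<not> (e \<in> Ycyc m (rotate i s) \<longleftrightarrow> e \<in> cycle_edges s)" by blast
    hence "e \<in> Dset s m i" using claimA[OF assms(2,3) e(1)] by metis
    thus "i \<in> (\<Union>e\<in>C. {i. i < m \<and> e \<in> Dset s m i})" using e by blast
  qed
  have one: "card {i. i < m \<and> e \<in> Dset s m i} \<le> 1" for e
  proof -
    have "\<forall>a\<in>{i. i < m \<and> e \<in> Dset s m i}. \<forall>b\<in>{i. i < m \<and> e \<in> Dset s m i}. a = b"
    proof (intro ballI)
      fix a b assume "a \<in> {i. i < m \<and> e \<in> Dset s m i}" "b \<in> {i. i < m \<and> e \<in> Dset s m i}"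
      thus "a = b" using Dset_disj[OF assms(1,2,3), of a b e] by simp
    qed
    moreover have fin: "finite {i. i < m \<and> e \<in> Dset s m i}" by auto
    ultimately show ?thesis unfolding One_nat_def using card_le_Suc0_iff_eq[OF fin] by blast
  qed
  have "card ?B \<le> card (\<Union>e\<in>C. {i. i < m \<and> e \<in> Dset s m i})"
    by (rule card_mono[OF _ sub]) (rule finite_UN_I[OF assms(4)], simp)
  also have "\<dots> \<le> (\<Sum>e\<in>C. card {i. i < m \<and> e \<in> Dset s m i})"
    by (rule card_UN_le[OF assms(4)])
  also have "\<dots> \<le> (\<Sum>e\<in>C. 1)" by (rule sum_mono) (rule one)
  also have "\<dots> = card C" by simp
  finally have cB: "card ?B \<le> k" using assms(5) by linarith
  have "?G \<union> ?B = {..<m}" by auto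
  moreover have "?G \<inter> ?B = {}" by auto
  moreover have "finite ?G" "finite ?B" by auto
  ultimately have "card ?G + card ?B = m"
    using card_Un_disjoint[of ?G ?B] by simp
  thus ?thesis using cB by linarith
qed

lemma one_cycle_iff: "3 \<le> n \<Longrightarrow> one_cycle n E \<longleftrightarrow> E \<in> cycle_edges ` Perms n"
  unfolding one_cycle_def Perms_def by auto

lemma two_cycles_iff:
  assumes "n = 2*m" "3 \<le> m"
  shows "two_cycles n E \<longleftrightarrow> E \<in> Ycyc m ` Perms n"
proof
  assume "two_cycles n E"
  then obtain vs ws where h: "distinct (vs @ ws)" "set (vs @ ws) = {1..n}"
      "2 * length vs = n" "2 * length ws = n" "E = cycle_edges vs \<union> cycle_edges ws"
    unfolding two_cycles_def by blast
  have "length vs = m" using h(3) assms by simp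
  hence "E = Ycyc m (vs @ ws)" unfolding Ycyc_def using h(5) by simp
  moreover have "vs @ ws \<in> Perms n" unfolding Perms_def using h assms by simp
  ultimately show "E \<in> Ycyc m ` Perms n" by blast
next
  assume "E \<in> Ycyc m ` Perms n"
  then obtain s where s: "s \<in> Perms n" "E = Ycyc m s" by blast
  let ?vs = "take m s" and ?ws = "drop m s"
  have "distinct (?vs @ ?ws)" "set (?vs @ ?ws) = {1..n}" "2 * length ?vs = n" "2 * length ?ws = n"
    "3 \<le> length ?vs" "3 \<le> length ?ws" "E = cycle_edges ?vs \<union> cycle_edges ?ws"
    using s assms unfolding Perms_def Ycyc_def by auto
  thus "two_cycles n E" unfolding two_cycles_def by blast
qed

lemma ce_subset_set: "e \<in> cycle_edges l \<Longrightarrow> e \<subseteq> set l"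
proof -
  assume "e \<in> cycle_edges l"
  then obtain j where j: "j < length l" "e = {l ! j, l ! ((j+1) mod length l)}"
    unfolding cycle_edges_def by blast
  have "0 < length l" using j by linarith
  hence "(j+1) mod length l < length l" by (rule mod_less_divisor)
  hence "l ! ((j+1) mod length l) \<in> set l" "l ! j \<in> set l" using j(1) by simp_all
  thus ?thesis using j(2) by simp
qed

lemma crossing:
  assumes "s \<in> Perms n" "V \<subseteq> {1..n}" "V \<noteq> {}" "V \<noteq> {1..n}"
  shows "\<exists>p<n. s ! p \<in> V \<and> s ! ((p+1) mod n) \<notin> V"
proof (rule ccontr)
  assume "\<not> ?thesis"
  hence cl: "\<And>p. p < n \<Longrightarrow> s ! p \<in> V \<Longrightarrow> s ! ((p+1) mod n) \<in> V" by blast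
  have sl: "set s = {1..n}" "length s = n" using assms(1) unfolding Perms_def by auto
  obtain v where "v \<in> V" using assms(3) by blast
  hence "v \<in> set s" using sl assms(2) by blast
  then obtain p0 where p0: "p0 < n" "s ! p0 = v" using sl by (metis in_set_conv_nth)
  have n0: "n > 0" using p0 by simp
  have all: "s ! ((p0 + t) mod n) \<in> V" for t
  proof (induction t)
    case 0 then show ?case using p0 \<open>v \<in> V\<close> by simp
  next
    case (Suc t)
    have "s ! (((p0 + t) mod n + 1) mod n) \<in> V" using cl[OF _ Suc] n0 by simp
    moreover have "((p0 + t) mod n + 1) mod n = (p0 + Suc t) mod n" by (simp add: mod_Suc_eq)
    ultimately show ?case by simp
  qed
  have "{1..n} \<subseteq> V"
  proof
    fix w assume "w \<in> {1..n}"
    then obtain q where q: "q < n" "s ! q = w" using sl by (metis in_set_conv_nth)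
    have "(p0 + (q + n - p0)) mod n = q" using q p0 by simp
    thus "w \<in> V" using all[of "q + n - p0"] q by simp
  qed
  thus False using assms by blast
qed

lemma one_two_disj:
  assumes "s \<in> Perms n" "t \<in> Perms n" "n = 2*m" "3 \<le> m"
  shows "cycle_edges s \<noteq> Ycyc m t"
proof
  assume eq: "cycle_edges s = Ycyc m t"
  let ?V = "set (take m t)"
  have tl: "distinct t" "set t = {1..n}" "length t = n" using assms(2) unfolding Perms_def by auto
  have V1: "?V \<subseteq> {1..n}" using tl by (metis set_take_subset)
  have lt: "length (take m t) = m" using tl assms by simp
  have V2: "?V \<noteq> {}"
  proof
    assume "?V = {}" hence "take m t = []" by simp
    thus False using lt assms(4) by simp
  qed
  have dis: "?V \<inter> set (drop m t) = {}" using set_take_disj_set_drop_if_distinct[OF tl(1), of m m] by simp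
  have un: "?V \<union> set (drop m t) = {1..n}" using tl by (metis append_take_drop_id set_append)
  have ld: "length (drop m t) = m" using tl assms by simp
  have dne: "set (drop m t) \<noteq> {}"
  proof
    assume "set (drop m t) = {}" hence "drop m t = []" by simp
    thus False using ld assms(4) by simp
  qed
  have V3: "?V \<noteq> {1..n}"
  proof
    assume aV: "?V = {1..n}"
    have "set (drop m t) \<subseteq> ?V \<union> set (drop m t)" by (rule Un_upper2)
    also have "\<dots> = {1..n}" by (rule un)
    also have "\<dots> = ?V" using aV by (rule sym)
    finally have "set (drop m t) \<subseteq> ?V" .
    hence "set (drop m t) \<subseteq> ?V \<inter> set (drop m t)" by (simp only: Int_greatest subset_refl)
    hence "set (drop m t) \<subseteq> {}" by (simp only: dis)
    thus False using dne by (simp only: subset_empty)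
  qed
  obtain p where p: "p < n" "s ! p \<in> ?V" "s ! ((p+1) mod n) \<notin> ?V"
    using crossing[OF assms(1) V1 V2 V3] by blast
  have sl: "length s = n" using assms(1) unfolding Perms_def by auto
  have "{s ! p, s ! ((p+1) mod n)} \<in> cycle_edges s" unfolding cycle_edges_def using p sl by auto
  hence "{s ! p, s ! ((p+1) mod n)} \<in> Ycyc m t" using eq by simp
  hence "{s ! p, s ! ((p+1) mod n)} \<in> cycle_edges (take m t) \<or> {s ! p, s ! ((p+1) mod n)} \<in> cycle_edges (drop m t)"
    unfolding Ycyc_def by simp
  hence "{s ! p, s ! ((p+1) mod n)} \<subseteq> ?V \<or> {s ! p, s ! ((p+1) mod n)} \<subseteq> set (drop m t)"
    using ce_subset_set[of _ "take m t"] ce_subset_set[of _ "drop m t"] by blast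
  thus False
  proof
    assume "{s ! p, s ! ((p+1) mod n)} \<subseteq> ?V" thus False using p(3) by simp
  next
    assume "{s ! p, s ! ((p+1) mod n)} \<subseteq> set (drop m t)"
    hence "s ! p \<in> set (drop m t)" by simp
    thus False using p(2) dis by (simp add: disjoint_iff)
  qed
qed

lemma Ycyc_map: "Ycyc m (map p t) = imgG p (Ycyc m t)"
  unfolding Ycyc_def by (simp add: take_map drop_map ce_map imgG_def image_Un)

lemma rotate_Perms: "s \<in> Perms n \<Longrightarrow> rotate i s \<in> Perms n"
  unfolding Perms_def by simp

lemma rotate_inj_on: "inj_on (rotate i) (Perms n)"
proof (rule inj_onI)
  fix s t assume st: "s \<in> Perms n" "t \<in> Perms n" "rotate i s = rotate i t"
  have l: "length s = n" "length t = n" using st unfolding Perms_def by auto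
  have "rotate (n - i mod n) (rotate i s) = rotate (n - i mod n) (rotate i t)" using st by simp
  hence "rotate (n - i mod n + i) s = rotate (n - i mod n + i) t" by (simp add: rotate_rotate)
  moreover have "(n - i mod n + i) mod n = 0" if False: "n \<noteq> 0"
  proof -
    have a: "i mod n < n" using False by simp
    have b: "i = i mod n + n * (i div n)" by simp
    have "n - i mod n + i = n + n * (i div n)" using a b by linarith
    thus ?thesis by simp
  qed
  ultimately show "s = t" using l by (cases "n = 0") (auto simp: rotate_id)
qed

lemma ce_Pairs:
  assumes "distinct l" "set l \<subseteq> {1..n}" "2 \<le> length l"
  shows "cycle_edges l \<subseteq> Pairs n"
proof
  fix e assume "e \<in> cycle_edges l"
  then obtain j where j: "j < length l" "e = {l ! j, l ! ((j+1) mod length l)}"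
    unfolding cycle_edges_def by blast
  have "0 < length l" using j by linarith
  hence jm: "(j+1) mod length l < length l" by (rule mod_less_divisor)
  have ne: "(j+1) mod length l \<noteq> j"
  proof (cases "j + 1 < length l")
    case True thus ?thesis by simp
  next
    case False
    hence "j + 1 = length l" using j by simp
    thus ?thesis using assms(3) by simp
  qed
  have "l ! j \<noteq> l ! ((j+1) mod length l)" using ne assms(1) j(1) jm by (simp add: nth_eq_iff_index_eq)
  moreover have "l ! j \<in> {1..n}" "l ! ((j+1) mod length l) \<in> {1..n}"
    using assms(2) j(1) jm nth_mem by blast+
  ultimately show "e \<in> Pairs n" unfolding Pairs_def using j(2) by blast
qed

lemma finite_Pairs: "finite (Pairs n)"
proof -
  have "Pairs n \<subseteq> (\<lambda>(i,j). {i,j}) ` ({1..n} \<times> {1..n})" unfolding Pairs_def by auto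
  thus ?thesis by (rule finite_subset) simp
qed

lemma Delta_eq:
  assumes "n = 2*m" "3 \<le> m"
  shows "Delta n = cycle_edges ` Perms n \<union> Ycyc m ` Perms n"
  using one_cycle_iff[of n] two_cycles_iff[OF assms] assms unfolding Delta_def by auto

lemma Delta_one:
  assumes "n = 2*m" "3 \<le> m"
  shows "{x \<in> Delta n. one_cycle n x} = cycle_edges ` Perms n"
  using one_cycle_iff[of n] Delta_eq[OF assms] assms by auto

lemma Delta_two:
  assumes "n = 2*m" "3 \<le> m"
  shows "{x \<in> Delta n. \<not> one_cycle n x} = Ycyc m ` Perms n"
proof -
  have "x \<notin> cycle_edges ` Perms n" if "x \<in> Ycyc m ` Perms n" for x
    using that one_two_disj[OF _ _ assms] by blast
  thus ?thesis using one_cycle_iff[of n] Delta_eq[OF assms] assms by auto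
qed

lemma Delta_Pairs:
  assumes "n = 2*m" "3 \<le> m" "x \<in> Delta n"
  shows "x \<subseteq> Pairs n"
proof -
  from assms(3) obtain t where t: "t \<in> Perms n" "x = cycle_edges t \<or> x = Ycyc m t"
    unfolding Delta_eq[OF assms(1,2)] by blast
  have tl: "distinct t" "set t = {1..n}" "length t = n" using t(1) unfolding Perms_def by auto
  have a: "cycle_edges t \<subseteq> Pairs n" by (rule ce_Pairs) (use tl assms in auto)
  have b: "cycle_edges (take m t) \<subseteq> Pairs n"
    by (rule ce_Pairs) (use tl assms set_take_subset[of m t] in auto)
  have c: "cycle_edges (drop m t) \<subseteq> Pairs n"
    by (rule ce_Pairs) (use tl assms set_drop_subset[of m t] in auto)
  show ?thesis using t(2) a b c unfolding Ycyc_def by blast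
qed

lemma finite_Delta:
  assumes "n = 2*m" "3 \<le> m"
  shows "finite (Delta n)"
  unfolding Delta_eq[OF assms] using finite_Perms by simp

lemma small_cert:
  assumes "n = 2*m" "3 \<le> m" "x \<in> Delta n"
  shows "\<exists>C. is_certificate n f x C \<and> finite C \<and> card C \<le> cert_complexity n f"
proof -
  let ?Cs = "{C. is_certificate n f x C}"
  have "Pairs n \<in> ?Cs"
    unfolding is_certificate_def
  proof (intro CollectI conjI subset_refl ballI impI)
    fix y assume y: "y \<in> Delta n" "\<forall>e\<in>Pairs n. (e \<in> y) = (e \<in> x)"
    have "y = x" using y Delta_Pairs[OF assms(1,2) y(1)] Delta_Pairs[OF assms] by blast
    thus "f y = f x" by simp
  qed
  moreover have "?Cs \<subseteq> Pow (Pairs n)" unfolding is_certificate_def by auto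
  hence fin: "finite (card ` ?Cs)" using finite_Pairs by (meson finite_Pow_iff finite_imageI finite_subset)
  ultimately have "Min (card ` ?Cs) \<in> card ` ?Cs" by (intro Min_in) auto
  then obtain C where C: "C \<in> ?Cs" "card C = Min (card ` ?Cs)" by auto
  have "Min (card ` ?Cs) \<le> cert_complexity n f"
    unfolding cert_complexity_def
    by (rule Max_ge) (use finite_Delta[OF assms(1,2)] assms(3) in auto)
  moreover have "finite C" using C(1) finite_Pairs unfolding is_certificate_def by (auto intro: finite_subset)
  ultimately show ?thesis using C by auto
qed

lemma key_ineq:
  assumes "n = 2*m" "3 \<le> m" "k = cert_complexity n f"
  shows "card {t \<in> Perms n. f (cycle_edges t)} * (m - k) \<le> m * card {t \<in> Perms n. f (Ycyc m t)}"
proof -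
  let ?P = "Perms n"
  let ?A = "{t \<in> ?P. f (cycle_edges t)}"
  let ?T = "{t \<in> ?P. f (Ycyc m t)}"
  let ?Q = "\<lambda>i t. f (Ycyc m (rotate i t))"
  have finP: "finite ?P" by (rule finite_Perms)
  have rot: "card {t \<in> ?P. ?Q i t} \<le> card ?T" for i
  proof (rule card_inj_on_le[where f="rotate i"])
    show "inj_on (rotate i) {t \<in> ?P. ?Q i t}" by (rule inj_on_subset[OF rotate_inj_on]) auto
    show "rotate i ` {t \<in> ?P. ?Q i t} \<subseteq> ?T" using rotate_Perms by auto
    show "finite ?T" using finP by simp
  qed
  have cnt: "card {t \<in> ?P. ?Q i t} = (\<Sum>t\<in>?P. if ?Q i t then 1 else 0)" for i
  proof -
    have "card {t \<in> ?P. ?Q i t} = (\<Sum>t\<in>{t \<in> ?P. ?Q i t}. 1::nat)" by simp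
    also have "\<dots> = (\<Sum>t\<in>?P. if ?Q i t then 1 else 0)" by (rule sum.inter_filter[OF finP])
    finally show ?thesis .
  qed
  have cnt2: "card {i. i < m \<and> ?Q i t} = (\<Sum>i<m. if ?Q i t then 1 else 0)" for t
  proof -
    have "{i. i < m \<and> ?Q i t} = {i \<in> {..<m}. ?Q i t}" by auto
    hence "card {i. i < m \<and> ?Q i t} = (\<Sum>i\<in>{i \<in> {..<m}. ?Q i t}. 1::nat)" by simp
    also have "\<dots> = (\<Sum>i<m. if ?Q i t then 1 else 0)" by (rule sum.inter_filter) simp
    finally show ?thesis .
  qed
  have good: "m - k \<le> card {i. i < m \<and> ?Q i t}" if t: "t \<in> ?A" for t
  proof -
    have tP: "t \<in> ?P" and ft: "f (cycle_edges t)" using t by auto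
    have tl: "distinct t" "length t = 2*m" using tP assms(1) unfolding Perms_def by auto
    have xD: "cycle_edges t \<in> Delta n" using Delta_eq[OF assms(1,2)] tP by blast
    obtain C where C: "is_certificate n f (cycle_edges t) C" "finite C" "card C \<le> k"
      using small_cert[OF assms(1,2) xD] assms(3) by blast
    have "m - k \<le> card {i. i < m \<and> (\<forall>e\<in>C. e \<in> Ycyc m (rotate i t) \<longleftrightarrow> e \<in> cycle_edges t)}"
      by (rule good_count[OF tl assms(2) C(2,3)])
    also have "\<dots> \<le> card {i. i < m \<and> ?Q i t}"
    proof (rule card_mono)
      show "finite {i. i < m \<and> ?Q i t}" by simp
      show "{i. i < m \<and> (\<forall>e\<in>C. e \<in> Ycyc m (rotate i t) \<longleftrightarrow> e \<in> cycle_edges t)} \<subseteq> {i. i < m \<and> ?Q i t}"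
      proof
        fix i assume i: "i \<in> {i. i < m \<and> (\<forall>e\<in>C. e \<in> Ycyc m (rotate i t) \<longleftrightarrow> e \<in> cycle_edges t)}"
        have "Ycyc m (rotate i t) \<in> Delta n" using Delta_eq[OF assms(1,2)] rotate_Perms[OF tP] by blast
        hence "f (Ycyc m (rotate i t)) = f (cycle_edges t)" using C(1) i unfolding is_certificate_def by blast
        thus "i \<in> {i. i < m \<and> ?Q i t}" using i ft by simp
      qed
    qed
    finally show ?thesis .
  qed
  have "card ?A * (m - k) = (\<Sum>t\<in>?A. m - k)" by simp
  also have "\<dots> \<le> (\<Sum>t\<in>?A. card {i. i < m \<and> ?Q i t})" by (rule sum_mono) (rule good)
  also have "\<dots> \<le> (\<Sum>t\<in>?P. card {i. i < m \<and> ?Q i t})"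
    by (rule sum_mono2[OF finP]) auto
  also have "\<dots> = (\<Sum>t\<in>?P. \<Sum>i<m. if ?Q i t then 1 else 0)" by (simp only: cnt2)
  also have "\<dots> = (\<Sum>i<m. \<Sum>t\<in>?P. if ?Q i t then 1 else 0)" by (rule sum.swap)
  also have "\<dots> = (\<Sum>i<m. card {t \<in> ?P. ?Q i t})" by (simp only: cnt)
  also have "\<dots> \<le> (\<Sum>i<m. card ?T)" by (rule sum_mono) (rule rot)
  also have "\<dots> = m * card ?T" by simp
  finally show ?thesis .
qed

lemma real_help: "(a::real) \<le> 2*t \<Longrightarrow> x + a = p \<Longrightarrow> 0 \<le> x \<Longrightarrow> p \<le> 2*(x+t)"
  by (simp add: algebra_simps)

lemma err_bound:
  assumes "n = 2*m" "3 \<le> m" "4 * cert_complexity n f < n"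
  shows "canon_err n (one_cycle n) f \<ge> 1/4"
proof -
  define k where "k = cert_complexity n f"
  let ?P = "Perms n"
  let ?A = "{t \<in> ?P. f (cycle_edges t)}"
  let ?nA = "{t \<in> ?P. \<not> f (cycle_edges t)}"
  let ?T = "{t \<in> ?P. f (Ycyc m t)}"
  have finP: "finite ?P" by (rule finite_Perms)
  have Pne: "card ?P > 0" using finP Perms_ne[of n] by (auto simp: card_gt_0_iff)
  have key: "card ?A * (m - k) \<le> m * card ?T" by (rule key_ineq[OF assms(1,2) k_def])
  have k2: "2 * k < m" using assms(1,3) k_def by simp
  have "m \<le> 2 * (m - k)" using k2 by linarith
  hence "card ?A * m \<le> card ?A * (2 * (m - k))" by (rule mult_le_mono2)
  also have "\<dots> = 2 * (card ?A * (m - k))" by simp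
  also have "\<dots> \<le> 2 * (m * card ?T)" using key by simp
  finally have "card ?A * m \<le> (2 * card ?T) * m" by (simp add: algebra_simps)
  hence aT: "card ?A \<le> 2 * card ?T" using assms(2) by simp
  have cmp: "card ?nA + card ?A = card ?P"
  proof -
    have "?nA \<union> ?A = ?P" by auto
    moreover have "?nA \<inter> ?A = {}" by auto
    moreover have "finite ?nA" "finite ?A" using finP by auto
    ultimately show ?thesis using card_Un_disjoint[of ?nA ?A] by simp
  qed
  have s1: "{x \<in> Delta n. one_cycle n x \<and> f x \<noteq> one_cycle n x} = {E \<in> cycle_edges ` ?P. \<not> f E}"
    using Delta_one[OF assms(1,2)] by blast
  have s2: "{x \<in> Delta n. one_cycle n x} = cycle_edges ` ?P" by (rule Delta_one[OF assms(1,2)])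
  have s3: "{x \<in> Delta n. \<not> one_cycle n x \<and> f x \<noteq> one_cycle n x} = {E \<in> Ycyc m ` ?P. f E}"
    using Delta_two[OF assms(1,2)] by blast
  have s4: "{x \<in> Delta n. \<not> one_cycle n x} = Ycyc m ` ?P" by (rule Delta_two[OF assms(1,2)])
  have r1: "real (card {E \<in> cycle_edges ` ?P. \<not> f E}) / real (card (cycle_edges ` ?P))
      = real (card ?nA) / real (card ?P)"
    by (rule fib_ratio) (rule ce_map)
  have r2: "real (card {E \<in> Ycyc m ` ?P. f E}) / real (card (Ycyc m ` ?P))
      = real (card ?T) / real (card ?P)"
    by (rule fib_ratio) (rule Ycyc_map)
  have "canon_err n (one_cycle n) f = (1/2) * (real (card ?nA) / real (card ?P)) + (1/2) * (real (card ?T) / real (card ?P))"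
    unfolding canon_err_def s1 s2 s3 s4 using r1 r2 by simp
  also have "\<dots> = (real (card ?nA) + real (card ?T)) / (2 * real (card ?P))"
    using Pne by (simp add: field_simps)
  also have "\<dots> \<ge> 1/4"
  proof -
    have "real (card ?A) \<le> 2 * real (card ?T)" using aT by linarith
    moreover have "real (card ?nA) + real (card ?A) = real (card ?P)" using cmp by linarith
    moreover have "0 \<le> real (card ?nA)" by simp
    ultimately have "real (card ?P) \<le> 2 * (real (card ?nA) + real (card ?T))" by (rule real_help)
    thus ?thesis using Pne by (simp add: field_simps)
  qed
  finally show ?thesis .
qed

theorem corollary5p12:
  fixes n :: nat
  assumes "even n" and "6 \<le> n"
  shows "real (approx_cert_complexity n (1/6) (oneVtwoCycle n)) \<ge> real n / 4"
proof -
  define m where "m = n div 2"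
  have nm: "n = 2*m" using assms(1) m_def by simp
  have m3: "3 \<le> m" using assms(2) nm by simp
  have g: "oneVtwoCycle n = one_cycle n" by (rule ext) (simp add: oneVtwoCycle_def)
  let ?S = "{cert_complexity n f | f. canon_err n (oneVtwoCycle n) f \<le> 1/6}"
  have "canon_err n (oneVtwoCycle n) (oneVtwoCycle n) = 0" unfolding canon_err_def by simp
  hence "cert_complexity n (oneVtwoCycle n) \<in> ?S" by auto
  hence "?S \<noteq> {}" by blast
  hence "Inf ?S \<in> ?S" by (rule Inf_nat_def1)
  then obtain f where f: "approx_cert_complexity n (1/6) (oneVtwoCycle n) = cert_complexity n f"
     "canon_err n (one_cycle n) f \<le> 1/6"
    unfolding approx_cert_complexity_def g by auto
  have "\<not> 4 * cert_complexity n f < n"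
  proof
    assume "4 * cert_complexity n f < n"
    hence "canon_err n (one_cycle n) f \<ge> 1/4" by (rule err_bound[OF nm m3])
    thus False using f(2) by simp
  qed
  hence "real n \<le> 4 * real (cert_complexity n f)" by linarith
  thus ?thesis using f(1) by simp
qed

end
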